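(* Assume hypotheses (A) and (B), suppose the routing matrix $P$ has a branching structure (for every $i$ the set $\{j:p_{ji}>0\}$ has at most one element), and let $\rho$ satisfy $(\rho P)_i<\rho_i$ for all $i$. Then for every $$0<\varepsilon<\min_{1\le i\le d}\frac{\rho_i}{G_{ii}}\Bigl(\frac{\mu_i}{\nu_i}-1\Bigr),$$ the function $h_{\varepsilon,\rho}(x)=\sum_{i=1}^d\prod_{j=1}^d(1+\varepsilon G_{ji}/\rho_i)^{x^j}$ satisfies $$\limsup_{|x|\to\infty}\frac{\mathcal{L}h_{\varepsilon,\rho}(x)}{h_{\varepsilon,\rho}(x)}=-\varepsilon\min_{1\le i\le d}\Bigl(\frac{\mu_i}{\rho_i+\varepsilon G_{ii}}-\frac{\nu_i}{\rho_i}\Bigr)<0.$$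
   Context: Jackson network with $d$ queues: arrival rates $\lambda_i\ge0$, service rates $\mu_i>0$, routing matrix $P=(p_{ij})_{i,j=1}^d$ nonnegative with $p_{ii}=0$, $\sum_jp_{ij}\le1$, $p_{i0}=1-\sum_jp_{ij}$. With $\epsilon^i$ the unit vectors, $q(\epsilon^i)=\lambda_i$, $q(-\epsilon^i)=\mu_ip_{i0}$, $q(\epsilon^j-\epsilon^i)=\mu_ip_{ij}$, $q=0$ otherwise; the process on $\mathbb{Z}_+^d$ has generator $\mathcal{L}f(y)=\sum_{z\in\mathbb{Z}_+^d}q(z-y)(f(z)-f(y))$. Hypothesis (A): $(q(x-y))_{x,y\in\mathbb{Z}^d}$ irreducible (equivalently spectral radius of $P$ $<1$ and for every $i$ some $\lambda_jp^{(n)}_{ji}>0$); the traffic equations $\nu_j=\lambda_j+\sum_i\nu_ip_{ij}$ have a unique solution with $\nu_i>0$. Hypothesis (B): $\nu_i<\mu_i$ for all $i$. $G=(I-P)^{-1}$, $(\rho P)_i=\sum_j\rho_jp_{ji}$. *)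

theory Defs
  imports "HOL-Analysis.Analysis"
begin

text \<open>Jackson network with index type 'd (finite, d = CARD('d) queues).
  States are vectors in Z_+^d, i.e. functions 'd \<Rightarrow> nat; jumps are
  vectors in Z^d, i.e. functions 'd \<Rightarrow> int.\<close>

definition unitv :: "'d \<Rightarrow> 'd \<Rightarrow> int" where
  "unitv i = (\<lambda>k. if k = i then 1 else 0)"

definition exit_prob :: "('d::finite \<Rightarrow> 'd \<Rightarrow> real) \<Rightarrow> 'd \<Rightarrow> real" where
  "exit_prob P i = 1 - (\<Sum>j\<in>UNIV. P i j)"

definition jrate ::
  "('d::finite \<Rightarrow> real) \<Rightarrow> ('d \<Rightarrow> real) \<Rightarrow> ('d \<Rightarrow> 'd \<Rightarrow> real) \<Rightarrow> ('d \<Rightarrow> int) \<Rightarrow> real" where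
  "jrate lam mu P w =
     (\<Sum>i\<in>UNIV. if w = unitv i then lam i else 0)
   + (\<Sum>i\<in>UNIV. if w = (\<lambda>k. - unitv i k) then mu i * exit_prob P i else 0)
   + (\<Sum>i\<in>UNIV. \<Sum>j\<in>UNIV. if i \<noteq> j \<and> w = (\<lambda>k. unitv j k - unitv i k) then mu i * P i j else 0)"

definition jgen ::
  "('d::finite \<Rightarrow> real) \<Rightarrow> ('d \<Rightarrow> real) \<Rightarrow> ('d \<Rightarrow> 'd \<Rightarrow> real)
   \<Rightarrow> (('d \<Rightarrow> nat) \<Rightarrow> real) \<Rightarrow> ('d \<Rightarrow> nat) \<Rightarrow> real" where
  "jgen lam mu P f y =
     (\<Sum>\<^sub>\<infinity>z. jrate lam mu P (\<lambda>k. int (z k) - int (y k)) * (f z - f y))"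

definition irreducible_rates :: "(('d \<Rightarrow> int) \<Rightarrow> real) \<Rightarrow> bool" where
  "irreducible_rates q \<longleftrightarrow> {(x, y). q (\<lambda>k. y k - x k) > 0}\<^sup>* = UNIV"

definition Gmat :: "('d::finite \<Rightarrow> 'd \<Rightarrow> real) \<Rightarrow> 'd \<Rightarrow> 'd \<Rightarrow> real" where
  "Gmat P i j = matrix_inv (mat 1 - (\<chi> a b. P a b)) $ i $ j"

definition hfun ::
  "('d::finite \<Rightarrow> 'd \<Rightarrow> real) \<Rightarrow> real \<Rightarrow> ('d \<Rightarrow> real) \<Rightarrow> ('d \<Rightarrow> nat) \<Rightarrow> real" where
  "hfun P eps rho x = (\<Sum>i\<in>UNIV. \<Prod>j\<in>UNIV. (1 + eps * Gmat P j i / rho i) ^ x j)"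

end

theory Submission
  imports Defs
begin


definition up :: "('d \<Rightarrow> nat) \<Rightarrow> 'd \<Rightarrow> ('d \<Rightarrow> nat)" where "up y i = y(i := Suc (y i))"
definition dn :: "('d \<Rightarrow> nat) \<Rightarrow> 'd \<Rightarrow> ('d \<Rightarrow> nat)" where "dn y i = y(i := y i - 1)"
definition mv :: "('d \<Rightarrow> nat) \<Rightarrow> 'd \<Rightarrow> 'd \<Rightarrow> ('d \<Rightarrow> nat)" where "mv y i j = (y(i := y i - 1))(j := Suc (y j))"

lemma c1: "((\<lambda>k. int (z k) - int (y k)) = unitv i) \<longleftrightarrow> z = up y i"
proof
  assume "(\<lambda>k. int (z k) - int (y k)) = unitv i"
  then have "\<And>k. int (z k) - int (y k) = (if k = i then 1 else 0)" by (metis unitv_def)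
  then show "z = up y i" unfolding up_def by (intro ext) (smt (verit) fun_upd_apply of_nat_Suc of_nat_eq_iff)
qed (auto simp: up_def unitv_def)

lemma c2: "((\<lambda>k. int (z k) - int (y k)) = (\<lambda>k. - unitv i k)) \<longleftrightarrow> 0 < y i \<and> z = dn y i"
proof
  assume "(\<lambda>k. int (z k) - int (y k)) = (\<lambda>k. - unitv i k)"
  then have h: "\<And>k. int (z k) - int (y k) = (if k = i then -1 else 0)" by (metis unitv_def neg_equal_0_iff_equal)
  then have "int (z i) - int (y i) = -1" by simp
  then have "0 < y i" by linarith
  moreover have "z = dn y i" unfolding dn_def 
  proof
    fix k show "z k = (y(i := y i - 1)) k" using h[of k] by auto
  qed
  ultimately show "0 < y i \<and> z = dn y i" by blast
qed (auto simp: dn_def unitv_def)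

lemma c3: assumes "i \<noteq> j" shows "((\<lambda>k. int (z k) - int (y k)) = (\<lambda>k. unitv j k - unitv i k)) \<longleftrightarrow> 0 < y i \<and> z = mv y i j"
proof
  assume "(\<lambda>k. int (z k) - int (y k)) = (\<lambda>k. unitv j k - unitv i k)"
  then have h: "\<And>k. int (z k) - int (y k) = (if k = i then -1 else if k = j then 1 else 0)" using assms by (auto simp: unitv_def fun_eq_iff)
  then have "int (z i) - int (y i) = -1" by simp
  then have "0 < y i" by linarith
  moreover have "z = mv y i j" unfolding mv_def 
  proof
    fix k show "z k = ((y(i := y i - 1))(j := Suc (y j))) k" using h[of k] assms by auto
  qed
  ultimately show "0 < y i \<and> z = mv y i j" by blast
qed (use assms in \<open>auto simp: mv_def unitv_def\<close>)

lemma jrate_pt: "jrate lam mu P (\<lambda>k. int (z k) - int (y k)) =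
   (\<Sum>i\<in>UNIV. if z = up y i then lam i else 0)
 + (\<Sum>i\<in>UNIV. if 0 < y i \<and> z = dn y i then mu i * exit_prob P i else 0)
 + (\<Sum>i\<in>UNIV. \<Sum>j\<in>UNIV. if i \<noteq> j \<and> 0 < y i \<and> z = mv y i j then mu i * P i j else 0)"
proof -
  have e: "(i \<noteq> j \<and> (\<lambda>k. int (z k) - int (y k)) = (\<lambda>k. unitv j k - unitv i k)) = (i \<noteq> j \<and> 0 < y i \<and> z = mv y i j)" for i j
    using c3[of i j z y] by blast
  show ?thesis unfolding jrate_def c1 c2 e ..
qed

definition nbhd :: "('d::finite \<Rightarrow> nat) \<Rightarrow> ('d \<Rightarrow> nat) set" where
  "nbhd y = {z. \<forall>k. z k \<le> Suc (y k)}"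

lemma finite_nbhd: "finite (nbhd (y::'d::finite \<Rightarrow> nat))"
proof -
  have "nbhd y \<subseteq> PiE UNIV (\<lambda>k. {..Suc (y k)})" by (auto simp: nbhd_def PiE_UNIV_domain)
  then show ?thesis by (rule finite_subset) (intro finite_PiE, auto)
qed

lemma in_nbhd: "up y i \<in> nbhd y" "dn y i \<in> nbhd y" "mv y i j \<in> nbhd y"
  by (auto simp: nbhd_def up_def dn_def mv_def)

lemma jgen_formula: "jgen lam mu P f (y::'d::finite \<Rightarrow> nat) =
   (\<Sum>i\<in>UNIV. lam i * (f (up y i) - f y))
 + (\<Sum>i\<in>UNIV. if 0 < y i then mu i * exit_prob P i * (f (dn y i) - f y) else 0)
 + (\<Sum>i\<in>UNIV. \<Sum>j\<in>UNIV. if i \<noteq> j \<and> 0 < y i then mu i * P i j * (f (mv y i j) - f y) else 0)" (is "_ = ?R")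
proof -
  have "jgen lam mu P f y = (\<Sum>z\<in>nbhd y. jrate lam mu P (\<lambda>k. int (z k) - int (y k)) * (f z - f y))"
    unfolding jgen_def
  proof (subst infsum_cong_neutral[where T="nbhd y"])
    show "jrate lam mu P (\<lambda>k. int (z k) - int (y k)) * (f z - f y) = 0" if "z \<in> UNIV - nbhd y" for z
    proof -
      have "z \<noteq> up y i" for i using that in_nbhd(1)[of y i] by auto
      moreover have "z \<noteq> dn y i" for i using that in_nbhd(2)[of y i] by auto
      moreover have "z \<noteq> mv y i j" for i j using that in_nbhd(3)[of y i j] by auto
      ultimately show ?thesis unfolding jrate_pt by simp
    qed
  qed (auto simp: finite_nbhd)
  also have "\<dots> = ?R"
  proof -
    have d: "\<And>z. z \<in> nbhd y \<Longrightarrow> True" by simp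
    have 1: "(\<Sum>z\<in>nbhd y. (\<Sum>i\<in>UNIV. if z = up y i then lam i else 0) * (f z - f y))
        = (\<Sum>i\<in>UNIV. lam i * (f (up y i) - f y))"
      unfolding sum_distrib_right
      apply (subst sum.swap)
      apply (simp add: if_distrib if_distribR in_nbhd finite_nbhd cong: if_cong)
      done
    have 2: "(\<Sum>z\<in>nbhd y. (\<Sum>i\<in>UNIV. if 0 < y i \<and> z = dn y i then mu i * exit_prob P i else 0) * (f z - f y))
        = (\<Sum>i\<in>UNIV. if 0 < y i then mu i * exit_prob P i * (f (dn y i) - f y) else 0)"
      unfolding sum_distrib_right
      apply (subst sum.swap)
      apply (rule sum.cong, simp)
      apply (simp add: if_distrib if_distribR in_nbhd finite_nbhd cong: if_cong)
      done
    have 3: "(\<Sum>z\<in>nbhd y. (\<Sum>i\<in>UNIV. \<Sum>j\<in>UNIV. if i \<noteq> j \<and> 0 < y i \<and> z = mv y i j then mu i * P i j else 0) * (f z - f y))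
        = (\<Sum>i\<in>UNIV. \<Sum>j\<in>UNIV. if i \<noteq> j \<and> 0 < y i then mu i * P i j * (f (mv y i j) - f y) else 0)"
      unfolding sum_distrib_right
      apply (subst sum.swap[where A="nbhd y"])
      apply (rule sum.cong, simp)
      apply (subst sum.swap[where A="nbhd y"])
      apply (rule sum.cong, simp)
      apply (simp add: if_distrib if_distribR in_nbhd finite_nbhd cong: if_cong)
      done
    show ?thesis unfolding jrate_pt distrib_right sum.distrib 1 2 3 ..
  qed
  finally show ?thesis .
qed



lemma sum_delta_mult: "(\<Sum>l\<in>UNIV. f l * (if l = i then 1 else 0)) = (f (i::'a::finite)::real)"
proof -
  have "(\<Sum>l\<in>UNIV. f l * (if l = i then 1 else 0)) = (\<Sum>l\<in>UNIV. if l = i then f l else 0)"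
    by (rule sum.cong) auto
  then show ?thesis by simp
qed

locale jn =
  fixes lam mu nu rho :: "'d::finite \<Rightarrow> real"
    and P :: "'d \<Rightarrow> 'd \<Rightarrow> real"
    and eps :: real
  assumes lam_nonneg: "\<And>i. lam i \<ge> 0"
    and mu_pos: "\<And>i. mu i > 0"
    and P_nonneg: "\<And>i j. P i j \<ge> 0"
    and P_diag: "\<And>i. P i i = 0"
    and P_substoch: "\<And>i. (\<Sum>j\<in>UNIV. P i j) \<le> 1"
    and hypA_traffic: "\<And>j. nu j = lam j + (\<Sum>i\<in>UNIV. nu i * P i j)"
    and hypA_nu_pos: "\<And>i. nu i > 0"
    and hypB: "\<And>i. nu i < mu i"
    and branching: "\<And>i. card {j. P j i > 0} \<le> 1"
    and rho: "\<And>i. (\<Sum>j\<in>UNIV. rho j * P j i) < rho i"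
    and eps_pos: "0 < eps"
begin

lemma P_le1: "P i j \<le> 1"
proof -
  have "P i j \<le> (\<Sum>k\<in>UNIV. P i k)" by (rule member_le_sum) (auto simp: P_nonneg)
  then show ?thesis using P_substoch[of i] by linarith
qed

lemma parent_cases:
  "(\<forall>j. P j i = 0) \<or> (\<exists>p. 0 < P p i \<and> (\<forall>j. j \<noteq> p \<longrightarrow> P j i = 0))"
proof (cases "{j. P j i > 0} = {}")
  case True
  then show ?thesis using P_nonneg by (metis (mono_tags, lifting) empty_Collect_eq order_neq_le_trans)
next
  case False
  have "finite {j. P j i > 0}" by simp
  with False branching[of i] have "card {j. P j i > 0} = 1"
    by (metis card_0_eq le_antisym less_one not_le)
  then obtain p where p: "{j. P j i > 0} = {p}" by (rule card_1_singletonE)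
  then have "0 < P p i" by auto
  moreover have "\<forall>j. j \<noteq> p \<longrightarrow> P j i = 0"
  proof (intro allI impI)
    fix j assume "j \<noteq> p"
    then have "\<not> 0 < P j i" using p by auto
    with P_nonneg[of j i] show "P j i = 0" by simp
  qed
  ultimately show ?thesis by blast
qed

lemma col_le1: "(\<Sum>j\<in>UNIV. P j i) \<le> 1"
  using parent_cases[of i]
proof
  assume "\<forall>j. P j i = 0" then show ?thesis by simp
next
  assume "\<exists>p. 0 < P p i \<and> (\<forall>j. j \<noteq> p \<longrightarrow> P j i = 0)"
  then obtain p where p: "\<forall>j. j \<noteq> p \<longrightarrow> P j i = 0" by blast
  have "(\<Sum>j\<in>UNIV. P j i) = P p i"
    by (subst sum.remove[of _ p]) (auto simp: p intro!: sum.neutral)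
  then show ?thesis using P_le1 by simp
qed

lemma rho_pos: "0 < rho i"
proof -
  have "Min (range rho) \<in> range rho" by (rule Min_in) auto
  then obtain m where m0: "Min (range rho) = rho m" by blast
  note m = m0[symmetric]
  have mle: "rho m \<le> rho k" for k by (simp add: m)
  have "0 < rho m"
  proof (rule ccontr)
    assume "\<not> 0 < rho m"
    then have neg: "rho m \<le> 0" by simp
    have "(\<Sum>j\<in>UNIV. rho m * P j m) \<le> (\<Sum>j\<in>UNIV. rho j * P j m)"
      by (rule sum_mono) (simp add: mle P_nonneg mult_right_mono)
    moreover have "rho m \<le> (\<Sum>j\<in>UNIV. rho m * P j m)"
    proof -
      have "rho m * 1 \<le> rho m * (\<Sum>j\<in>UNIV. P j m)"
        using mult_left_mono_neg[OF col_le1[of m] neg] .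
      then show ?thesis by (simp add: sum_distrib_left)
    qed
    ultimately show False using rho[of m] by linarith
  qed
  then show ?thesis using mle[of i] by linarith
qed

lemma posL:
  assumes v: "\<And>i. (\<Sum>j\<in>UNIV. v j * P j i) \<le> v i"
  shows "0 \<le> v i"
proof -
  define t where "t = Min (range (\<lambda>i. v i / rho i))"
  have "t \<in> range (\<lambda>i. v i / rho i)" unfolding t_def by (rule Min_in) auto
  then obtain m where m0: "t = v m / rho m" by blast
  note m = m0[symmetric]
  have tle: "t \<le> v k / rho k" for k unfolding t_def by simp
  have vk: "t * rho k \<le> v k" for k using tle[of k] rho_pos[of k] by (simp add: pos_le_divide_eq)
  have vm: "v m = t * rho m" using m rho_pos[of m] by (simp add: divide_eq_eq)
  have "0 \<le> t"
  proof (rule ccontr)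
    assume "\<not> 0 \<le> t"
    then have tneg: "t < 0" by simp
    have "(\<Sum>j\<in>UNIV. t * rho j * P j m) \<le> (\<Sum>j\<in>UNIV. v j * P j m)"
      by (rule sum_mono) (simp add: vk P_nonneg mult_right_mono)
    moreover have "(\<Sum>j\<in>UNIV. t * rho j * P j m) = t * (\<Sum>j\<in>UNIV. rho j * P j m)"
      by (simp add: sum_distrib_left mult.assoc)
    moreover have "t * rho m < t * (\<Sum>j\<in>UNIV. rho j * P j m)"
      using rho[of m] tneg by (simp add: mult_less_cancel_left_neg)
    ultimately show False using v[of m] vm by linarith
  qed
  then show ?thesis using vk[of i] rho_pos[of i] by (smt (verit) mult_nonneg_nonneg)
qed

definition Amat :: "real^'d^'d" where "Amat = mat 1 - (\<chi> a b. P a b)"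

lemma Amat_entry: "Amat $ i $ j = (if i = j then 1 else 0) - P i j"
  by (simp add: Amat_def mat_def)

lemma Amat_inv: "invertible Amat"
proof -
  have "inj ((*v) (transpose Amat))"
  proof (rule injI)
    fix v w :: "real^'d"
    assume eq: "transpose Amat *v v = transpose Amat *v w"
    have e: "(transpose Amat *v u) $ i = u $ i - (\<Sum>j\<in>UNIV. u $ j * P j i)" for u i
    proof -
      have "(transpose Amat *v u) $ i = (\<Sum>j\<in>UNIV. u $ j * ((if j = i then 1 else 0) - P j i))"
        by (simp add: matrix_vector_mult_def transpose_def Amat_entry mult.commute)
      also have "\<dots> = (\<Sum>j\<in>UNIV. u $ j * (if j = i then 1 else 0)) - (\<Sum>j\<in>UNIV. u $ j * P j i)"
        by (simp only: right_diff_distrib sum_subtractf)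
      also have "(\<Sum>j\<in>UNIV. u $ j * (if j = i then 1 else 0)) = (\<Sum>j\<in>UNIV. (if j = i then u $ j else 0))"
        by (rule sum.cong) auto
      finally show ?thesis by simp
    qed
    have "v $ i - w $ i = 0" for i
    proof -
      have d: "(\<Sum>j\<in>UNIV. (v$j - w$j) * P j i) = v $ i - w $ i" for i
        using eq e[of v i] e[of w i] by (simp add: vec_eq_iff left_diff_distrib sum_subtractf)
      have "0 \<le> v $ i - w $ i" by (rule posL) (simp add: d)
      moreover have "0 \<le> w $ i - v $ i"
      proof (rule posL)
        fix i
        have "(\<Sum>j\<in>UNIV. (w$j - v$j) * P j i) = - (\<Sum>j\<in>UNIV. (v$j - w$j) * P j i)"
          by (simp add: sum_negf[symmetric] algebra_simps)
        then show "(\<Sum>j\<in>UNIV. (w$j - v$j) * P j i) \<le> w $ i - v $ i" using d[of i] by simp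
      qed
      ultimately show ?thesis by simp
    qed
    then show "v = w" by (simp add: vec_eq_iff)
  qed
  then have "\<exists>B. B ** transpose Amat = mat 1" using matrix_left_invertible_injective by blast
  then have "\<exists>B. Amat ** B = mat 1" using left_invertible_transpose by blast
  then show ?thesis using invertible_right_inverse by blast
qed

lemma Ginv: "Amat ** matrix_inv Amat = mat 1" "matrix_inv Amat ** Amat = mat 1"
proof -
  have "\<exists>A'. Amat ** A' = mat 1 \<and> A' ** Amat = mat 1" using Amat_inv invertible_def by blast
  then have "Amat ** matrix_inv Amat = mat 1 \<and> matrix_inv Amat ** Amat = mat 1"
    unfolding matrix_inv_def by (rule someI_ex)
  then show "Amat ** matrix_inv Amat = mat 1" "matrix_inv Amat ** Amat = mat 1" by auto
qed

abbreviation G where "G \<equiv> Gmat P"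

lemma G_entry: "G i j = matrix_inv Amat $ i $ j" by (simp add: Gmat_def Amat_def)

lemma F2: "(\<Sum>k\<in>UNIV. P j k * G k i) = G j i - (if j = i then 1 else 0)"
proof -
  have "(Amat ** matrix_inv Amat) $ j $ i = (if j = i then 1 else 0)" by (simp add: Ginv mat_def)
  then have "(\<Sum>k\<in>UNIV. ((if j = k then 1 else 0) - P j k) * G k i) = (if j = i then 1 else 0)"
    by (simp add: matrix_matrix_mult_def Amat_entry G_entry)
  then show ?thesis by (simp add: left_diff_distrib sum_subtractf if_distrib[where f="\<lambda>x. x * _"] cong: if_cong)
qed

lemma F3: "(\<Sum>l\<in>UNIV. G j l * P l k) = G j k - (if j = k then 1 else 0)"
proof -
  have "(matrix_inv Amat ** Amat) $ j $ k = (if j = k then 1 else 0)" by (simp add: Ginv mat_def)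
  then have "(\<Sum>l\<in>UNIV. G j l * ((if l = k then 1 else 0) - P l k)) = (if j = k then 1 else 0)"
    by (simp add: matrix_matrix_mult_def Amat_entry G_entry)
  then show ?thesis by (simp add: right_diff_distrib sum_subtractf if_distrib[where f="\<lambda>x. _ * x"] cong: if_cong)
qed

lemma G_nonneg: "0 \<le> G j i"
  by (rule posL[where v="\<lambda>i. G j i"]) (simp add: F3)

lemma G_diag: "1 \<le> G i i"
proof -
  have "0 \<le> (\<Sum>l\<in>UNIV. G i l * P l i)" by (intro sum_nonneg) (simp add: G_nonneg P_nonneg)
  then show ?thesis using F3[of i i] by simp
qed

lemma F4: "(\<Sum>j\<in>UNIV. lam j * G j i) = nu i"
proof -
  have "(\<Sum>j\<in>UNIV. lam j * G j i) = (\<Sum>j\<in>UNIV. (nu j - (\<Sum>l\<in>UNIV. nu l * P l j)) * G j i)"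
  proof (rule sum.cong)
    fix j have "lam j = nu j - (\<Sum>l\<in>UNIV. nu l * P l j)" using hypA_traffic[of j] by linarith
    then show "lam j * G j i = (nu j - (\<Sum>l\<in>UNIV. nu l * P l j)) * G j i" by simp
  qed simp
  also have "\<dots> = (\<Sum>j\<in>UNIV. nu j * G j i) - (\<Sum>j\<in>UNIV. \<Sum>l\<in>UNIV. nu l * P l j * G j i)"
    by (simp add: left_diff_distrib sum_subtractf sum_distrib_right)
  also have "(\<Sum>j\<in>UNIV. \<Sum>l\<in>UNIV. nu l * P l j * G j i) = (\<Sum>l\<in>UNIV. nu l * (\<Sum>j\<in>UNIV. P l j * G j i))"
    by (subst sum.swap) (simp add: sum_distrib_left mult.assoc)
  also have "\<dots> = (\<Sum>l\<in>UNIV. nu l * G l i) - nu i"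
    by (simp add: F2 right_diff_distrib sum_subtractf sum_delta_mult)
  finally show ?thesis by simp
qed
end


definition Lf :: "('d::finite \<Rightarrow> real) \<Rightarrow> ('d \<Rightarrow> real) \<Rightarrow> ('d \<Rightarrow> 'd \<Rightarrow> real)
   \<Rightarrow> (('d \<Rightarrow> nat) \<Rightarrow> real) \<Rightarrow> ('d \<Rightarrow> nat) \<Rightarrow> real" where
  "Lf lam mu P f y =
   (\<Sum>i\<in>UNIV. lam i * (f (up y i) - f y))
 + (\<Sum>i\<in>UNIV. (if 0 < y i then mu i * exit_prob P i * (f (dn y i) - f y) else 0)
   + (\<Sum>j\<in>UNIV. if i \<noteq> j \<and> 0 < y i then mu i * P i j * (f (mv y i j) - f y) else 0))"

lemma jgen_Lf: "jgen lam mu P f y = Lf lam mu P f y"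
  unfolding jgen_formula Lf_def sum.distrib by simp

lemma Lf_sum: "Lf lam mu P (\<lambda>z. \<Sum>k\<in>UNIV. g k z) y = (\<Sum>k\<in>UNIV. Lf lam mu P (g k) y)"
proof -
  have 1: "(\<Sum>i\<in>UNIV. lam i * ((\<Sum>k\<in>UNIV. g k (up y i)) - (\<Sum>k\<in>UNIV. g k y)))
     = (\<Sum>k\<in>UNIV. \<Sum>i\<in>UNIV. lam i * (g k (up y i) - g k y))"
    by (subst sum.swap) (simp add: sum_subtractf[symmetric] sum_distrib_left)
  have 2: "(if 0 < y i then mu i * exit_prob P i * ((\<Sum>k\<in>UNIV. g k (dn y i)) - (\<Sum>k\<in>UNIV. g k y)) else 0)
     = (\<Sum>k\<in>UNIV. if 0 < y i then mu i * exit_prob P i * (g k (dn y i) - g k y) else 0)" for i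
    by (cases "0 < y i") (simp_all add: sum_subtractf[symmetric] sum_distrib_left)
  have 3: "(\<Sum>j\<in>UNIV. if i \<noteq> j \<and> 0 < y i then mu i * P i j * ((\<Sum>k\<in>UNIV. g k (mv y i j)) - (\<Sum>k\<in>UNIV. g k y)) else 0)
     = (\<Sum>k\<in>UNIV. \<Sum>j\<in>UNIV. if i \<noteq> j \<and> 0 < y i then mu i * P i j * (g k (mv y i j) - g k y) else 0)" for i
  proof -
    have "(if i \<noteq> j \<and> 0 < y i then mu i * P i j * ((\<Sum>k\<in>UNIV. g k (mv y i j)) - (\<Sum>k\<in>UNIV. g k y)) else 0)
      = (\<Sum>k\<in>UNIV. if i \<noteq> j \<and> 0 < y i then mu i * P i j * (g k (mv y i j) - g k y) else 0)" for j
      by (cases "i \<noteq> j \<and> 0 < y i") (auto simp add: sum_subtractf[symmetric] sum_distrib_left)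
    then show ?thesis by (subst sum.swap) simp
  qed
  show ?thesis
    unfolding Lf_def 1 2 3 sum.distrib[symmetric]
    by (subst (2) sum.swap) (simp add: sum.distrib)
qed

definition hk :: "('d::finite \<Rightarrow> real) \<Rightarrow> ('d \<Rightarrow> nat) \<Rightarrow> real" where
  "hk b x = (\<Prod>j\<in>UNIV. b j ^ x j)"

lemma hk_upd: "hk b (y(i := n)) * b i ^ y i = hk b y * b i ^ n"
proof -
  have e: "(\<Prod>j\<in>UNIV - {i}. b j ^ (y(i := n)) j) = (\<Prod>j\<in>UNIV - {i}. b j ^ y j)"
    by (rule prod.cong) auto
  show ?thesis unfolding hk_def
    by (simp add: prod.remove[of UNIV i] e)
qed

lemma hk_up: "hk b (up y i) = b i * hk b y"
  using hk_upd[of b y i "Suc (y i)"] unfolding up_def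
  by (cases "b i = 0") (auto simp: hk_def prod.remove[of UNIV i] mult.commute)

lemma hk_dn: assumes "0 < y i" shows "hk b (dn y i) * b i = hk b y"
proof -
  have e: "(\<Prod>j\<in>UNIV - {i}. b j ^ (dn y i) j) = (\<Prod>j\<in>UNIV - {i}. b j ^ y j)"
    by (rule prod.cong) (auto simp: dn_def)
  have "b i ^ (y i - 1) * b i = b i ^ y i" using assms
    by (metis Suc_diff_1 power_Suc2)
  then show ?thesis unfolding hk_def
    by (simp add: prod.remove[of UNIV i] e dn_def mult_ac)
qed

lemma hk_mv: assumes "0 < y i" "i \<noteq> j" shows "hk b (mv y i j) * b i = b j * hk b y"
proof -
  have "mv y i j = up (dn y i) j" using assms by (auto simp: mv_def up_def dn_def)
  then have "hk b (mv y i j) = b j * hk b (dn y i)" by (simp add: hk_up)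
  then show ?thesis using hk_dn[of y i b] assms by (simp add: mult.assoc)
qed



context jn begin

definition aa :: "'d \<Rightarrow> 'd \<Rightarrow> real" where "aa j k = 1 + eps * G j k / rho k"

lemma aa_ge1: "1 \<le> aa j k"
  unfolding aa_def using eps_pos G_nonneg[of j k] rho_pos[of k] by simp

lemma aa_pos: "0 < aa j k" using aa_ge1[of j k] by simp

lemma aa_diag: "1 < aa k k"
  unfolding aa_def using eps_pos G_diag[of k] rho_pos[of k] by simp

lemma rho_aa: "rho k * aa k k = rho k + eps * G k k"
  unfolding aa_def using rho_pos[of k] by (simp add: field_simps)

lemma hfun_eq: "hfun P eps rho x = (\<Sum>k\<in>UNIV. hk (\<lambda>j. aa j k) x)"
  unfolding hfun_def hk_def aa_def ..

definition Lk :: "'d \<Rightarrow> ('d \<Rightarrow> nat) \<Rightarrow> real" where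
  "Lk k y = eps * nu k / rho k - (if 0 < y k then eps * mu k / (rho k + eps * G k k) else 0)"

lemma part1: "(\<Sum>i\<in>UNIV. lam i * (hk (\<lambda>j. aa j k) (up y i) - hk (\<lambda>j. aa j k) y))
   = hk (\<lambda>j. aa j k) y * (eps * nu k / rho k)"
proof -
  define h where "h = hk (\<lambda>j. aa j k) y"
  have "(\<Sum>i\<in>UNIV. lam i * (hk (\<lambda>j. aa j k) (up y i) - h)) = (\<Sum>i\<in>UNIV. h * (eps / rho k) * (lam i * G i k))"
    by (rule sum.cong) (simp_all add: hk_up h_def aa_def algebra_simps)
  also have "\<dots> = h * (eps / rho k) * (\<Sum>i\<in>UNIV. lam i * G i k)" by (rule sum_distrib_left[symmetric])
  also have "\<dots> = h * (eps / rho k) * nu k" by (simp only: F4)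
  finally show ?thesis by (simp add: h_def)
qed

lemma part2:
  "(if 0 < y i then mu i * exit_prob P i * (hk (\<lambda>j. aa j k) (dn y i) - hk (\<lambda>j. aa j k) y) else 0)
   + (\<Sum>j\<in>UNIV. if i \<noteq> j \<and> 0 < y i then mu i * P i j * (hk (\<lambda>j. aa j k) (mv y i j) - hk (\<lambda>j. aa j k) y) else 0)
   = (if 0 < y i \<and> i = k then - (hk (\<lambda>j. aa j k) y * (eps * mu k / (rho k + eps * G k k))) else 0)"
proof (cases "0 < y i")
  case False then show ?thesis by simp
next
  case yi: True
  define h where "h = hk (\<lambda>j. aa j k) y"
  define A where "A = aa i k"
  have Apos: "0 < A" unfolding A_def by (rule aa_pos)
  have rk: "0 < rho k" by (rule rho_pos)
  have dn: "hk (\<lambda>j. aa j k) (dn y i) = h / A"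
    using hk_dn[of y i "\<lambda>j. aa j k"] yi Apos by (simp add: h_def A_def field_simps)
  have mvs: "(\<Sum>j\<in>UNIV. if i \<noteq> j \<and> 0 < y i then mu i * P i j * (hk (\<lambda>j. aa j k) (mv y i j) - h) else 0)
      = (\<Sum>j\<in>UNIV. mu i * P i j * (aa j k * h / A - h))"
  proof (rule sum.cong)
    fix j
    show "(if i \<noteq> j \<and> 0 < y i then mu i * P i j * (hk (\<lambda>j. aa j k) (mv y i j) - h) else 0)
      = mu i * P i j * (aa j k * h / A - h)"
    proof (cases "i = j")
      case True then show ?thesis by (simp add: P_diag)
    next
      case False
      have "hk (\<lambda>j. aa j k) (mv y i j) = aa j k * h / A"
        using hk_mv[of y i j "\<lambda>j. aa j k"] yi False Apos by (simp add: h_def A_def field_simps)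
      then show ?thesis using False yi by simp
    qed
  qed simp
  define S1 where "S1 = (\<Sum>j\<in>UNIV. P i j)"
  define S2 where "S2 = (\<Sum>j\<in>UNIV. P i j * G j k)"
  have S2: "S2 = G i k - (if i = k then 1 else 0)" unfolding S2_def by (rule F2)
  have Paa: "(\<Sum>j\<in>UNIV. P i j * aa j k) = S1 + eps / rho k * S2"
  proof -
    have "(\<Sum>j\<in>UNIV. P i j * aa j k) = (\<Sum>j\<in>UNIV. P i j + eps / rho k * (P i j * G j k))"
      by (rule sum.cong) (simp_all add: aa_def algebra_simps)
    then show ?thesis by (simp add: S1_def S2_def sum.distrib sum_distrib_left)
  qed
  have sumj: "(\<Sum>j\<in>UNIV. mu i * P i j * (aa j k * h / A - h)) = mu i * (h / A * (S1 + eps / rho k * S2) - h * S1)"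
  proof -
    have "(\<Sum>j\<in>UNIV. mu i * P i j * (aa j k * h / A - h)) = (\<Sum>j\<in>UNIV. mu i * (h / A) * (P i j * aa j k) - mu i * h * P i j)"
      by (rule sum.cong) (simp_all add: algebra_simps)
    also have "\<dots> = mu i * (h / A) * (\<Sum>j\<in>UNIV. P i j * aa j k) - mu i * h * S1"
      by (simp add: sum_subtractf sum_distrib_left S1_def)
    finally show ?thesis by (simp add: Paa algebra_simps)
  qed
  have ex: "exit_prob P i = 1 - S1" by (simp add: exit_prob_def S1_def)
  have lhs: "(if 0 < y i then mu i * exit_prob P i * (hk (\<lambda>j. aa j k) (dn y i) - h) else 0)
   + (\<Sum>j\<in>UNIV. if i \<noteq> j \<and> 0 < y i then mu i * P i j * (hk (\<lambda>j. aa j k) (mv y i j) - h) else 0)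
   = mu i * (h / A * (1 + eps / rho k * S2) - h)"
    unfolding mvs sumj using yi by (simp add: dn ex algebra_simps)
  have A_eq: "A = 1 + eps * G i k / rho k" by (simp add: A_def aa_def)
  show ?thesis
  proof (cases "i = k")
    case False
    have "1 + eps / rho k * S2 = A" using False by (simp add: S2 A_eq)
    then show ?thesis unfolding h_def[symmetric] using lhs False Apos by simp
  next
    case True
    have f1: "1 + eps / rho k * S2 = A - eps / rho k" using True by (simp add: S2 A_eq algebra_simps)
    have f3: "rho k * A = rho k + eps * G k k" using True rho_aa by (simp add: A_def)
    have f2: "h / A * (A - eps / rho k) - h = - (h * eps / (rho k * A))"
      using Apos rk by (simp add: field_simps)
    have "mu i * (h / A * (1 + eps / rho k * S2) - h) = mu k * (- (h * eps / (rho k * A)))"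
      unfolding f1 f2 True ..
    also have "\<dots> = - (h * (eps * mu k / (rho k + eps * G k k)))" unfolding f3 by simp
    finally have "mu i * (h / A * (1 + eps / rho k * S2) - h) = - (h * (eps * mu k / (rho k + eps * G k k)))" .
    then show ?thesis unfolding h_def[symmetric] using lhs True yi by simp
  qed
qed

lemma Lf_hk: "Lf lam mu P (hk (\<lambda>j. aa j k)) y = hk (\<lambda>j. aa j k) y * Lk k y"
proof -
  have "Lf lam mu P (hk (\<lambda>j. aa j k)) y = hk (\<lambda>j. aa j k) y * (eps * nu k / rho k)
     + (\<Sum>i\<in>UNIV. if 0 < y i \<and> i = k then - (hk (\<lambda>j. aa j k) y * (eps * mu k / (rho k + eps * G k k))) else 0)"
    unfolding Lf_def part1 part2 ..
  also have "(\<Sum>i\<in>UNIV. if 0 < y i \<and> i = k then - (hk (\<lambda>j. aa j k) y * (eps * mu k / (rho k + eps * G k k))) else 0)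
     = (\<Sum>i\<in>UNIV. if i = k then (if 0 < y k then - (hk (\<lambda>j. aa j k) y * (eps * mu k / (rho k + eps * G k k))) else 0) else 0)"
    by (rule sum.cong) auto
  also have "hk (\<lambda>j. aa j k) y * (eps * nu k / rho k) + \<dots> = hk (\<lambda>j. aa j k) y * Lk k y"
    by (simp add: Lk_def algebra_simps)
  finally show ?thesis .
qed

lemma jgen_h: "jgen lam mu P (hfun P eps rho) y = (\<Sum>k\<in>UNIV. hk (\<lambda>j. aa j k) y * Lk k y)"
proof -
  have "hfun P eps rho = (\<lambda>z. \<Sum>k\<in>UNIV. hk (\<lambda>j. aa j k) z)" by (simp add: hfun_eq fun_eq_iff)
  then show ?thesis by (simp add: jgen_Lf Lf_sum Lf_hk)
qed

end


lemma factor_ineq: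
  fixes a t :: real and N :: nat
  assumes a: "1 \<le> a" and t0: "0 \<le> t" and t1: "t < 1" and N: "a / (1 - t) \<le> real N" and N1: "1 \<le> N"
  shows "(1 + t * (a - 1)) ^ N \<le> a ^ (N - 1)"
proof -
  define b where "b = 1 + t * (a - 1)"
  have b1: "1 \<le> b" unfolding b_def using a t0 by simp
  have ba: "b \<le> a" unfolding b_def using a t1 mult_left_mono[of t 1 "a - 1"] by (simp add: mult.commute)
  have ab: "a - b = (1 - t) * (a - 1)" unfolding b_def by (simp add: algebra_simps)
  define u where "u = (a - b) / b"
  have u0: "0 \<le> u" unfolding u_def using ba b1 by simp
  have ab1: "a / b = 1 + u" unfolding u_def using b1 by (simp add: field_simps)
  have "(a - b) / a \<le> u" unfolding u_def using ba b1 a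
    by (intro divide_left_mono) auto
  then have u1: "(1 - t) * (a - 1) / a \<le> u" by (simp add: ab)
  have "real N * ((1 - t) * (a - 1) / a) \<ge> (a / (1 - t)) * ((1 - t) * (a - 1) / a)"
    using N a t1 by (intro mult_right_mono) auto
  moreover have "(a / (1 - t)) * ((1 - t) * (a - 1) / a) = a - 1" using a t1 by (simp add: field_simps)
  ultimately have "a - 1 \<le> real N * u"
    using u1 mult_left_mono[OF u1, of "real N"] by linarith
  moreover have "1 + real N * u \<le> (1 + u) ^ N" using Bernoulli_inequality[of u N] u0 by simp
  ultimately have "a \<le> (a / b) ^ N" using ab1 by simp
  then have "a \<le> a ^ N / b ^ N" by (simp add: power_divide)
  then have "a * b ^ N \<le> a ^ N" using b1 by (simp add: pos_le_divide_eq)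
  also have "a ^ N = a * a ^ (N - 1)" using N1 by (metis Suc_diff_1 less_le_trans power_Suc zero_less_one)
  finally have "b ^ N \<le> a ^ (N - 1)" using a by simp
  then show ?thesis by (simp add: b_def)
qed

context jn begin

definition tk :: "'d \<Rightarrow> real" where "tk k = (\<Sum>j\<in>UNIV. rho j * P j k) / rho k"

lemma tk0: "0 \<le> tk k"
  unfolding tk_def using rho_pos by (intro divide_nonneg_pos sum_nonneg) (auto simp: P_nonneg less_imp_le)

lemma tk1: "tk k < 1"
  unfolding tk_def using rho[of k] rho_pos[of k] by simp

definition Tm where "Tm = Max (range tk)"
definition Am where "Am = Max (range (\<lambda>jp. aa (fst jp) (snd jp)))"
definition NN :: nat where "NN = nat \<lceil>Am / (1 - Tm)\<rceil> + 1"

lemma Tm: "tk k \<le> Tm" "Tm < 1"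
proof -
  show "tk k \<le> Tm" unfolding Tm_def by simp
  have "Tm \<in> range tk" unfolding Tm_def by (rule Max_in) auto
  then show "Tm < 1" using tk1 by auto
qed

lemma Am: "aa j p \<le> Am"
  unfolding Am_def by (rule Max_ge) (auto intro: rev_image_eqI[of "(j,p)"])

lemma NN1: "1 \<le> NN" unfolding NN_def by simp

lemma NN_bound: "aa j p / (1 - tk k) \<le> real NN"
proof -
  have "aa j p / (1 - tk k) \<le> Am / (1 - tk k)"
    using Am[of j p] tk1[of k] by (simp add: divide_right_mono)
  also have "\<dots> \<le> Am / (1 - Tm)"
    using Tm(1)[of k] Tm(2) tk1[of k] aa_ge1[of j p] Am[of j p]
    by (intro divide_left_mono) auto
  also have "\<dots> \<le> real NN" unfolding NN_def by linarith
  finally show ?thesis .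
qed

lemma parent_aa:
  assumes pk: "0 < P p k" and oth: "\<forall>j. j \<noteq> p \<longrightarrow> P j k = 0" and jk: "j \<noteq> k"
  shows "aa j k = 1 + tk k * (aa j p - 1)"
proof -
  have "(\<Sum>l\<in>UNIV. G j l * P l k) = G j p * P p k"
    by (subst sum.remove[of _ p]) (auto simp: oth intro!: sum.neutral)
  then have Gjk: "G j k = G j p * P p k" using F3[of j k] jk by simp
  have "(\<Sum>l\<in>UNIV. rho l * P l k) = rho p * P p k"
    by (subst sum.remove[of _ p]) (auto simp: oth intro!: sum.neutral)
  then have t: "tk k = rho p * P p k / rho k" by (simp add: tk_def)
  show ?thesis using rho_pos[of p] rho_pos[of k]
    by (simp add: aa_def Gjk t field_simps)
qed

lemma root_aa:
  assumes oth: "\<forall>j. P j k = 0" and jk: "j \<noteq> k"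
  shows "aa j k = 1"
proof -
  have "G j k = 0" using F3[of j k] jk oth by simp
  then show ?thesis by (simp add: aa_def)
qed

abbreviation hh where "hh k x \<equiv> hk (\<lambda>j. aa j k) x"

lemma hh_ge1: "1 \<le> hh k x"
  unfolding hk_def by (intro prod_ge_1 one_le_power aa_ge1) 

lemma HH_ge: "hh k x \<le> hfun P eps rho x"
  unfolding hfun_eq by (rule member_le_sum) (auto intro: order_trans[OF zero_le_one hh_ge1])

lemma HH_ge1: "1 \<le> hfun P eps rho x"
  using hh_ge1 HH_ge order_trans by blast

lemma dom:
  assumes xk: "x k = 0"
  shows "hh k x ^ NN \<le> hfun P eps rho x ^ (NN - 1)"
proof -
  have pw: "hh k x ^ NN = (\<Prod>j\<in>UNIV. (aa j k ^ NN) ^ x j)"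
    unfolding hk_def prod_power_distrib by (rule prod.cong) (simp_all add: power_mult[symmetric] mult.commute)
  from parent_cases[of k] show ?thesis
  proof
    assume r: "\<forall>j. P j k = 0"
    have "(\<Prod>j\<in>UNIV. (aa j k ^ NN) ^ x j) = 1"
      by (rule prod.neutral) (use xk root_aa[OF r] in \<open>metis power_0 power_one\<close>)
    then show ?thesis unfolding pw using HH_ge1 by (simp add: one_le_power)
  next
    assume "\<exists>p. 0 < P p k \<and> (\<forall>j. j \<noteq> p \<longrightarrow> P j k = 0)"
    then obtain p where pk: "0 < P p k" and oth: "\<forall>j. j \<noteq> p \<longrightarrow> P j k = 0" by blast
    have "(\<Prod>j\<in>UNIV. (aa j k ^ NN) ^ x j) \<le> (\<Prod>j\<in>UNIV. (aa j p ^ (NN - 1)) ^ x j)"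
    proof (rule prod_mono, rule conjI)
      fix j
      show "0 \<le> (aa j k ^ NN) ^ x j" using aa_pos[of j k] by simp
      show "(aa j k ^ NN) ^ x j \<le> (aa j p ^ (NN - 1)) ^ x j"
      proof (cases "j = k")
        case True then show ?thesis using xk by simp
      next
        case False
        have "aa j k ^ NN \<le> aa j p ^ (NN - 1)"
          unfolding parent_aa[OF pk oth False]
          by (rule factor_ineq[OF aa_ge1 tk0 tk1 NN_bound NN1])
        then show ?thesis using aa_pos[of j k] by (intro power_mono) auto
      qed
    qed
    also have "\<dots> = hh p x ^ (NN - 1)"
      unfolding hk_def prod_power_distrib by (rule prod.cong) (simp_all add: power_mult[symmetric] mult.commute)
    also have "\<dots> \<le> hfun P eps rho x ^ (NN - 1)"
      using HH_ge[of p x] hh_ge1[of p x] by (intro power_mono) auto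
    finally show ?thesis unfolding pw .
  qed
qed

end


lemma finite_box: "finite {x :: 'd::finite \<Rightarrow> nat. \<forall>m. x m \<le> B}"
proof -
  have "{x :: 'd \<Rightarrow> nat. \<forall>m. x m \<le> B} \<subseteq> PiE UNIV (\<lambda>k. {..B})" by (auto simp: PiE_UNIV_domain)
  then show ?thesis by (rule finite_subset) (intro finite_PiE, auto)
qed

context jn begin

definition cc :: "'d \<Rightarrow> real" where "cc k = eps * mu k / (rho k + eps * G k k)"
definition rr :: "'d \<Rightarrow> real" where "rr k = eps * nu k / rho k - cc k"

lemma den_pos: "0 < rho k + eps * G k k"
  using rho_pos[of k] eps_pos G_nonneg[of k k] by (simp add: add_pos_nonneg)

lemma cc_pos: "0 < cc k" unfolding cc_def using den_pos[of k] eps_pos mu_pos[of k] by simp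

lemma Lk_eq: "Lk k x = rr k + (if x k = 0 then cc k else 0)"
  unfolding Lk_def rr_def cc_def by auto

lemma hh_ge_pow: "aa m m ^ x m \<le> hh m x"
proof -
  have "1 \<le> (\<Prod>j\<in>UNIV - {m}. aa j m ^ x j)" by (intro prod_ge_1 one_le_power aa_ge1)
  then have "aa m m ^ x m * 1 \<le> aa m m ^ x m * (\<Prod>j\<in>UNIV - {m}. aa j m ^ x j)"
    using aa_pos[of m m] by (intro mult_left_mono) auto
  then show ?thesis unfolding hk_def by (simp add: prod.remove[of UNIV m])
qed

lemma finite_small: "finite {x. hfun P eps rho x < K}"
proof -
  have "\<forall>m. \<exists>n. K < aa m m ^ n" using aa_diag real_arch_pow by blast
  then obtain nf where nf: "\<And>m. K < aa m m ^ nf m" by metis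
  define B where "B = Max (range nf)"
  have "{x. hfun P eps rho x < K} \<subseteq> {x. \<forall>m. x m \<le> B}"
  proof (safe, rule ccontr)
    fix x m assume H: "hfun P eps rho x < K" and "\<not> x m \<le> B"
    moreover have "nf m \<le> B" unfolding B_def by (rule Max_ge) auto
    ultimately have "nf m \<le> x m" by linarith
    then have "aa m m ^ nf m \<le> aa m m ^ x m" using aa_diag[of m] by (intro power_increasing) auto
    then show False using nf[of m] hh_ge_pow[of m x] HH_ge[of m x] H by linarith
  qed
  then show ?thesis by (rule finite_subset) (rule finite_box)
qed

lemma small_weight:
  assumes d: "0 < d" and K: "(1 / d) ^ NN \<le> hfun P eps rho x" and xk: "x k = 0"
  shows "hh k x \<le> d * hfun P eps rho x"
proof -
  define H where "H = hfun P eps rho x"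
  have H1: "1 \<le> H" unfolding H_def by (rule HH_ge1)
  have "(hh k x / H) ^ NN = hh k x ^ NN / H ^ NN" by (simp add: power_divide)
  also have "\<dots> \<le> H ^ (NN - 1) / H ^ NN" using dom[of x k, OF xk] H1 by (simp add: H_def divide_right_mono)
  also have "H ^ NN = H * H ^ (NN - 1)" using NN1 by (metis Suc_diff_1 less_le_trans power_Suc zero_less_one)
  also have "H ^ (NN - 1) / (H * H ^ (NN - 1)) = 1 / H" using H1 by simp
  also have "1 / H \<le> d ^ NN"
  proof -
    have f1: "(1 / d) ^ NN \<le> H" using K by (simp add: H_def)
    have f2: "0 < (1 / d) ^ NN" using d by simp
    have "1 / H \<le> 1 / (1 / d) ^ NN" by (rule frac_le[of 1 1 "(1 / d) ^ NN" H]) (simp_all only: f1 f2 order_refl zero_le_one)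
    moreover have "1 / (1 / d) ^ NN = d ^ NN" by (simp add: power_one_over)
    ultimately show ?thesis by (rule ord_le_eq_trans)
  qed
  finally have pw: "(hh k x / H) ^ NN \<le> d ^ NN" .
  have "Suc (NN - 1) = NN" using NN1 by simp
  then have "(hh k x / H) ^ Suc (NN - 1) \<le> d ^ Suc (NN - 1)" using pw by simp
  then have "hh k x / H \<le> d" by (rule power_le_imp_le_base) (use d in simp)
  then show ?thesis using H1 by (simp add: H_def pos_divide_le_eq mult.commute)
qed

definition MM where "MM = - eps * Min (range (\<lambda>i. mu i / (rho i + eps * G i i) - nu i / rho i))"

lemma rr_alt: "rr k = - eps * (mu k / (rho k + eps * G k k) - nu k / rho k)"
  unfolding rr_def cc_def by (simp add: algebra_simps)

lemma rr_le: "rr k \<le> MM"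
  unfolding MM_def rr_alt using eps_pos by (intro mult_left_mono_neg) auto

lemma rr_att: "\<exists>i. rr i = MM"
proof -
  have "Min (range (\<lambda>i. mu i / (rho i + eps * G i i) - nu i / rho i)) \<in> range (\<lambda>i. mu i / (rho i + eps * G i i) - nu i / rho i)"
    by (rule Min_in) auto
  then obtain i where "Min (range (\<lambda>i. mu i / (rho i + eps * G i i) - nu i / rho i)) = mu i / (rho i + eps * G i i) - nu i / rho i" by blast
  then show ?thesis unfolding MM_def rr_alt by auto
qed

lemma MM_neg:
  assumes eps_bound: "eps < Min (range (\<lambda>i. rho i / G i i * (mu i / nu i - 1)))"
  shows "MM < 0"
proof -
  have pos: "0 < mu i / (rho i + eps * G i i) - nu i / rho i" for i
  proof -
    have "eps < rho i / G i i * (mu i / nu i - 1)"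
      using eps_bound Min_le[of "range (\<lambda>i. rho i / G i i * (mu i / nu i - 1))"] by fastforce
    then have "eps * G i i * nu i < rho i * (mu i - nu i)"
      using G_diag[of i] hypA_nu_pos[of i] by (simp add: field_simps)
    then have "nu i * (rho i + eps * G i i) < mu i * rho i" by (simp add: algebra_simps)
    moreover have "mu i / (rho i + eps * G i i) - nu i / rho i = (mu i * rho i - nu i * (rho i + eps * G i i)) / ((rho i + eps * G i i) * rho i)"
      using den_pos[of i] rho_pos[of i] by (simp add: field_simps)
    ultimately show ?thesis using den_pos[of i] rho_pos[of i] by (simp add: divide_pos_pos)
  qed
  have "Min (range (\<lambda>i. mu i / (rho i + eps * G i i) - nu i / rho i)) \<in> range (\<lambda>i. mu i / (rho i + eps * G i i) - nu i / rho i)"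
    by (rule Min_in) auto
  then have "0 < Min (range (\<lambda>i. mu i / (rho i + eps * G i i) - nu i / rho i))" using pos by auto
  then show ?thesis unfolding MM_def using eps_pos by (simp add: mult_pos_pos)
qed

abbreviation RR where "RR x \<equiv> jgen lam mu P (hfun P eps rho) x / hfun P eps rho x"

lemma RR_upper:
  assumes d: "0 < d" and K: "(1 / d) ^ NN \<le> hfun P eps rho x"
  shows "RR x \<le> MM + d * (\<Sum>k\<in>UNIV. cc k)"
proof -
  define H where "H = hfun P eps rho x"
  have H1: "1 \<le> H" unfolding H_def by (rule HH_ge1)
  have "jgen lam mu P (hfun P eps rho) x = (\<Sum>k\<in>UNIV. hh k x * rr k + (if x k = 0 then hh k x * cc k else 0))"
    unfolding jgen_h Lk_eq by (rule sum.cong) (auto simp: algebra_simps)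
  also have "\<dots> \<le> (\<Sum>k\<in>UNIV. hh k x * MM + d * H * cc k)"
  proof (rule sum_mono)
    fix k
    have a: "hh k x * rr k \<le> hh k x * MM" using rr_le[of k] hh_ge1[of k x] by (intro mult_left_mono) auto
    have b: "(if x k = 0 then hh k x * cc k else 0) \<le> d * H * cc k"
    proof (cases "x k = 0")
      case True
      then have "hh k x \<le> d * H" unfolding H_def using small_weight[OF d K] by simp
      then show ?thesis using True cc_pos[of k] by (simp add: mult_right_mono)
    next
      case False then show ?thesis using d H1 cc_pos[of k] by simp
    qed
    show "hh k x * rr k + (if x k = 0 then hh k x * cc k else 0) \<le> hh k x * MM + d * H * cc k"
      using a b by linarith
  qed
  also have "\<dots> = (\<Sum>k\<in>UNIV. hh k x) * MM + d * H * (\<Sum>k\<in>UNIV. cc k)"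
    by (simp add: sum.distrib sum_distrib_left sum_distrib_right)
  also have "\<dots> = H * (MM + d * (\<Sum>k\<in>UNIV. cc k))"
    by (simp add: H_def hfun_eq algebra_simps)
  finally show ?thesis using H1 by (simp add: H_def pos_divide_le_eq mult.commute)
qed

lemma RR_lower:
  assumes MMneg: "MM < 0" and ri: "rr i = MM"
  shows "MM \<le> RR (\<lambda>j. if j = i then Suc n else 0)"
proof -
  define x where "x = (\<lambda>j. if j = i then Suc n else (0::nat))"
  define H where "H = hfun P eps rho x"
  have H1: "1 \<le> H" unfolding H_def by (rule HH_ge1)
  have L: "MM \<le> Lk k x" for k
  proof (cases "k = i")
    case True then show ?thesis using ri by (simp add: Lk_eq x_def)
  next
    case False
    then have "Lk k x = eps * nu k / rho k" by (simp add: Lk_eq x_def rr_def)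
    moreover have "0 < eps * nu k / rho k" using eps_pos hypA_nu_pos[of k] rho_pos[of k] by simp
    ultimately show ?thesis using MMneg by simp
  qed
  have "H * MM = (\<Sum>k\<in>UNIV. hh k x * MM)" by (simp add: H_def hfun_eq sum_distrib_right)
  also have "\<dots> \<le> (\<Sum>k\<in>UNIV. hh k x * Lk k x)"
    using L hh_ge1 by (intro sum_mono mult_left_mono) (auto intro: order_trans[OF zero_le_one])
  also have "\<dots> = jgen lam mu P (hfun P eps rho) x" by (simp add: jgen_h)
  finally show ?thesis using H1 by (simp add: H_def x_def pos_le_divide_eq mult.commute)
qed

end


context jn begin

lemma limsup_main:
  assumes eps_bound: "eps < Min (range (\<lambda>i. rho i / G i i * (mu i / nu i - 1)))"
  shows "Limsup cofinite (\<lambda>x. ereal (RR x)) = ereal MM"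
proof (rule antisym)
  show "Limsup cofinite (\<lambda>x. ereal (RR x)) \<le> ereal MM"
    unfolding Limsup_le_iff
  proof (intro allI impI)
    fix y :: ereal assume y: "ereal MM < y"
    show "\<forall>\<^sub>F x in cofinite. ereal (RR x) < y"
    proof (cases y)
      case (real z)
      then have zM: "MM < z" using y by simp
      define C where "C = (\<Sum>k\<in>UNIV. cc k)"
      have C0: "0 \<le> C" unfolding C_def using cc_pos by (simp add: sum_nonneg less_imp_le)
      define d where "d = (z - MM) / (C + 1)"
      have d: "0 < d" unfolding d_def using zM C0 by simp
      have dC: "d * C < z - MM"
      proof -
        have "d * C = (z - MM) * (C / (C + 1))" unfolding d_def by simp
        also have "\<dots> < (z - MM) * 1" using zM C0 by (intro mult_strict_left_mono) auto
        finally show ?thesis by simp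
      qed
      have "{x. \<not> ereal (RR x) < y} \<subseteq> {x. hfun P eps rho x < (1 / d) ^ NN}"
      proof (safe, rule ccontr)
        fix x assume nl: "\<not> ereal (RR x) < y" and "\<not> hfun P eps rho x < (1 / d) ^ NN"
        then have "(1 / d) ^ NN \<le> hfun P eps rho x" by simp
        then have "RR x \<le> MM + d * C" unfolding C_def by (rule RR_upper[OF d])
        then have "RR x < z" using dC by simp
        then show False using nl real by simp
      qed
      then have "finite {x. \<not> ereal (RR x) < y}" by (rule finite_subset) (rule finite_small)
      then show ?thesis by (simp add: eventually_cofinite)
    next
      case PInf then show ?thesis by simp
    next
      case MInf then show ?thesis using y by simp
    qed
  qed
next
  show "ereal MM \<le> Limsup cofinite (\<lambda>x. ereal (RR x))"
    unfolding Limsup_def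
  proof (rule INF_greatest)
    fix Q :: "('d \<Rightarrow> nat) \<Rightarrow> bool" assume "Q \<in> {Q. eventually Q cofinite}"
    then have fin: "finite {x. \<not> Q x}" by (simp add: eventually_cofinite)
    obtain i where ri: "rr i = MM" using rr_att by blast
    define xs where "xs = (\<lambda>n::nat. (\<lambda>j. if j = i then Suc n else (0::nat)))"
    have "inj xs"
    proof (rule injI)
      fix m n assume "xs m = xs n"
      then have "xs m i = xs n i" by simp
      then show "m = n" by (simp add: xs_def)
    qed
    have "\<exists>n. Q (xs n)"
    proof (rule ccontr)
      assume "\<not> (\<exists>n. Q (xs n))"
      then have "range xs \<subseteq> {x. \<not> Q x}" by auto
      then have "finite (range xs)" using fin by (rule finite_subset)
      then show False using \<open>inj xs\<close> by (simp add: finite_image_iff)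
    qed
    then obtain n where Qn: "Q (xs n)" by blast
    have "MM \<le> RR (xs n)" unfolding xs_def by (rule RR_lower[OF MM_neg[OF eps_bound] ri])
    then have "ereal MM \<le> ereal (RR (xs n))" by simp
    also have "\<dots> \<le> (SUP x\<in>{x. Q x}. ereal (RR x))" using Qn by (intro SUP_upper) auto
    finally show "ereal MM \<le> (SUP x\<in>{x. Q x}. ereal (RR x))" .
  qed
qed

end

theorem corollary3p1:
  fixes lam mu nu rho :: "'d::finite \<Rightarrow> real"
    and P :: "'d \<Rightarrow> 'd \<Rightarrow> real"
    and eps :: real
  assumes lam_nonneg: "\<And>i. lam i \<ge> 0"
    and mu_pos: "\<And>i. mu i > 0"
    and P_nonneg: "\<And>i j. P i j \<ge> 0"
    and P_diag: "\<And>i. P i i = 0"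
    and P_substoch: "\<And>i. (\<Sum>j\<in>UNIV. P i j) \<le> 1"
    and hypA_irred: "irreducible_rates (jrate lam mu P)"
    and hypA_traffic: "\<And>j. nu j = lam j + (\<Sum>i\<in>UNIV. nu i * P i j)"
    and hypA_nu_pos: "\<And>i. nu i > 0"
    and hypB: "\<And>i. nu i < mu i"
    and branching: "\<And>i. card {j. P j i > 0} \<le> 1"
    and rho: "\<And>i. (\<Sum>j\<in>UNIV. rho j * P j i) < rho i"
    and eps_pos: "0 < eps"
    and eps_bound: "eps < Min (range (\<lambda>i. rho i / Gmat P i i * (mu i / nu i - 1)))"
  shows "Limsup cofinite (\<lambda>x. ereal (jgen lam mu P (hfun P eps rho) x / hfun P eps rho x))
           = ereal (- eps * Min (range (\<lambda>i. mu i / (rho i + eps * Gmat P i i) - nu i / rho i)))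
         \<and> - eps * Min (range (\<lambda>i. mu i / (rho i + eps * Gmat P i i) - nu i / rho i)) < 0"
proof -
  interpret J: jn lam mu nu rho P eps
    using lam_nonneg mu_pos P_nonneg P_diag P_substoch hypA_traffic hypA_nu_pos hypB branching rho eps_pos
    by (unfold_locales) assumption+
  show ?thesis
    using J.limsup_main[OF eps_bound] J.MM_neg[OF eps_bound] unfolding J.MM_def by simp
qed

end
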